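(* No maximal ideal $\mathcal{I}$ on $\omega$ with $\mathrm{fin} \subseteq \mathcal{I}$ is uniformly weakly Ramsey.
   Context: $\mathrm{fin}$ is the ideal of finite subsets of $\omega$; $\mathcal{I}^+$ denotes the $\mathcal{I}$-positive sets (subsets of $\omega$ not in $\mathcal{I}$); for $A \subseteq \omega$, $\mathcal{I}|A = \{I \subseteq A : I \in \mathcal{I}\}$, an ideal on $A$, and $(\mathcal{I}|A)^+$ is the family of subsets of $A$ not in $\mathcal{I}$. A coloring is a function $c : [\omega]^2 \to 2$; it is subadditive if $c(\{m,n\}) \le c(\{m,k\}) + c(\{n,k\})$ for all $m<n<k$. A set $H$ is 0-homogeneous for $c$ if $c(\{m,n\}) = 0$ for all distinct $m,n \in H$; $H$ is nowhere 0-homogeneous (with respect to $\mathcal{I}$ and $c$) if every $B \in (\mathcal{I}|H)^+$ contains distinct $m,n$ with $c(\{m,n\}) = 1$. A function $\Phi : [\omega]^\omega \times 2^{[\omega]^2} \to [\omega]^\omega$ witnesses that $\mathcal{I}$ is weakly Ramsey if for every $A \in \mathcal{I}^+$ and every subadditive coloring $c$, $H = \Phi(A,c)$ belongs to $(\mathcal{I}|A)^+$ and is either 0-homogeneous or nowhere 0-homogeneous for $c$. $\mathcal{I}$ is uniformly weakly Ramsey if some Borel function witnesses that $\mathcal{I}$ is weakly Ramsey. *)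

theory Defs
  imports "HOL-Analysis.Analysis"
begin

definition is_ideal :: "nat set set \<Rightarrow> bool" where
  "is_ideal I \<longleftrightarrow> {} \<in> I \<and> UNIV \<notin> I \<and> (\<forall>A\<in>I. \<forall>B. B \<subseteq> A \<longrightarrow> B \<in> I)
     \<and> (\<forall>A\<in>I. \<forall>B\<in>I. A \<union> B \<in> I)"

definition maximal_ideal :: "nat set set \<Rightarrow> bool" where
  "maximal_ideal I \<longleftrightarrow> is_ideal I \<and> (\<forall>J. is_ideal J \<and> I \<subseteq> J \<longrightarrow> J = I)"

text \<open>A coloring c of pairs is coded by c m n for m < n (True = colour 1);
  entries with m >= n are ignored.\<close>
type_synonym coloring = "nat \<Rightarrow> nat \<Rightarrow> bool"

definition subadditive :: "coloring \<Rightarrow> bool" where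
  "subadditive c \<longleftrightarrow> (\<forall>m n k. m < n \<and> n < k \<longrightarrow> c m n \<longrightarrow> c m k \<or> c n k)"

definition zero_homogeneous :: "coloring \<Rightarrow> nat set \<Rightarrow> bool" where
  "zero_homogeneous c H \<longleftrightarrow> (\<forall>m\<in>H. \<forall>n\<in>H. m < n \<longrightarrow> \<not> c m n)"

definition nowhere_zero_homogeneous :: "nat set set \<Rightarrow> coloring \<Rightarrow> nat set \<Rightarrow> bool" where
  "nowhere_zero_homogeneous I c H \<longleftrightarrow>
     (\<forall>B. B \<subseteq> H \<and> B \<notin> I \<longrightarrow> (\<exists>m\<in>B. \<exists>n\<in>B. m < n \<and> c m n))"

definition weakly_Ramsey_witness :: "nat set set \<Rightarrow> (nat set \<times> coloring \<Rightarrow> nat set) \<Rightarrow> bool" where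
  "weakly_Ramsey_witness I \<Phi> \<longleftrightarrow>
     (\<forall>A c. infinite A \<longrightarrow> infinite (\<Phi> (A, c))) \<and>
     (\<forall>A c. A \<notin> I \<and> subadditive c \<longrightarrow>
        \<Phi> (A, c) \<subseteq> A \<and> \<Phi> (A, c) \<notin> I \<and>
        (zero_homogeneous c (\<Phi> (A, c)) \<or> nowhere_zero_homogeneous I c (\<Phi> (A, c))))"

text \<open>Borelness: subsets of omega are identified with points of the Cantor space
  nat => bool (product topology), colorings with points of nat => nat => bool;
  Phi must be Borel measurable on [omega]^omega x 2^(pairs).\<close>
definition uniformly_weakly_Ramsey :: "nat set set \<Rightarrow> bool" where
  "uniformly_weakly_Ramsey I \<longleftrightarrow>
     (\<exists>\<Phi>. weakly_Ramsey_witness I \<Phi> \<and>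
        (\<lambda>(f::nat \<Rightarrow> bool, c::coloring). (\<lambda>n. n \<in> \<Phi> (Collect f, c)))
          \<in> measurable (restrict_space borel {(f, c). infinite (Collect f)}) borel)"

end

theory Submission
  imports Defs "HOL-Probability.Probability"
begin


lemma open_bool_all: "open (S::bool set)"
  by (rule Topological_Spaces.open_discrete)

instance bool :: second_countable_topology
proof
  show "\<exists>B::bool set set. countable B \<and> open = generate_topology B"
  proof (intro exI[of _ "Pow UNIV"] conjI)
    show "countable (Pow (UNIV::bool set))" by (simp add: countable_finite)
    show "open = generate_topology (Pow (UNIV::bool set))"
    proof (rule ext)
      fix S :: "bool set"
      have "open S" by (rule open_bool_all)
      moreover have "generate_topology (Pow UNIV) S" by (rule generate_topology.Basis) simp
      ultimately show "open S = generate_topology (Pow UNIV) S" by simp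
    qed
  qed
qed



lemma max_prime:
  assumes "maximal_ideal I"
  shows "X \<in> I \<or> - X \<in> I"
proof (rule ccontr)
  assume n: "\<not> (X \<in> I \<or> - X \<in> I)"
  have id: "is_ideal I" using assms by (simp add: maximal_ideal_def)
  define J where "J = {B. \<exists>C\<in>I. B \<subseteq> X \<union> C}"
  have "is_ideal J"
    unfolding is_ideal_def
  proof (intro conjI ballI allI impI)
    show "{} \<in> J" using id unfolding J_def is_ideal_def by blast
    show "UNIV \<notin> J"
    proof
      assume "UNIV \<in> J"
      then obtain C where "C \<in> I" "UNIV \<subseteq> X \<union> C" unfolding J_def by blast
      then have "- X \<subseteq> C" by blast
      with \<open>C \<in> I\<close> id n show False unfolding is_ideal_def by blast
    qed
    show "B \<in> J" if "A \<in> J" "B \<subseteq> A" for A B using that unfolding J_def by blast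
    show "A \<union> B \<in> J" if ab: "A \<in> J" "B \<in> J" for A B
    proof -
      obtain C1 C2 where "C1 \<in> I" "C2 \<in> I" "A \<subseteq> X \<union> C1" "B \<subseteq> X \<union> C2"
        using ab unfolding J_def by blast
      moreover have "C1 \<union> C2 \<in> I" using id calculation unfolding is_ideal_def by blast
      ultimately show ?thesis unfolding J_def by blast
    qed
  qed
  moreover have "I \<subseteq> J" unfolding J_def by blast
  ultimately have "J = I" using assms unfolding maximal_ideal_def by blast
  moreover have "X \<in> J" using id unfolding J_def is_ideal_def by blast
  ultimately show False using n by blast
qed

definition col :: "(nat \<Rightarrow> bool) \<Rightarrow> coloring" where
  "col f = (\<lambda>m n. f m \<noteq> f n)"

lemma col_sub: "subadditive (col f)"
  unfolding subadditive_def col_def by auto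

lemma key:
  assumes "maximal_ideal I" "weakly_Ramsey_witness I \<Phi>"
  shows "Collect f \<notin> I \<longleftrightarrow> (\<exists>n. n \<in> \<Phi> (UNIV, col f) \<and> f n)"
proof -
  have id: "is_ideal I" using assms by (simp add: maximal_ideal_def)
  have U: "UNIV \<notin> I" using id unfolding is_ideal_def by blast
  define H where "H = \<Phi> (UNIV, col f)"
  have HI: "H \<notin> I" and HH: "zero_homogeneous (col f) H \<or> nowhere_zero_homogeneous I (col f) H"
    using assms(2) U col_sub unfolding weakly_Ramsey_witness_def H_def by blast+
  have zh: "zero_homogeneous (col f) H"
  proof (rule ccontr)
    assume "\<not> zero_homogeneous (col f) H"
    with HH have nz: "nowhere_zero_homogeneous I (col f) H" by blast
    have "H \<inter> Collect f \<in> I"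
    proof (rule ccontr)
      assume "H \<inter> Collect f \<notin> I"
      then obtain m n where "m \<in> H \<inter> Collect f" "n \<in> H \<inter> Collect f" "col f m n"
        using nz unfolding nowhere_zero_homogeneous_def by (meson inf_le1)
      then show False by (simp add: col_def)
    qed
    moreover have "H - Collect f \<in> I"
    proof (rule ccontr)
      assume "H - Collect f \<notin> I"
      then obtain m n where "m \<in> H - Collect f" "n \<in> H - Collect f" "col f m n"
        using nz unfolding nowhere_zero_homogeneous_def by (meson Diff_subset)
      then show False by (simp add: col_def)
    qed
    ultimately have "(H \<inter> Collect f) \<union> (H - Collect f) \<in> I" using id unfolding is_ideal_def by blast
    moreover have "(H \<inter> Collect f) \<union> (H - Collect f) = H" by blast
    ultimately show False using HI by simp
  qed
  have ne: "H \<noteq> {}" using HI id unfolding is_ideal_def by blast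
  have same: "f m = f n" if "m \<in> H" "n \<in> H" for m n
    using zh that unfolding zero_homogeneous_def col_def
    by (metis linorder_neqE_nat)
  show ?thesis
  proof
    assume "Collect f \<notin> I"
    then have "- Collect f \<in> I" using max_prime[OF assms(1)] by blast
    show "\<exists>n. n \<in> \<Phi> (UNIV, col f) \<and> f n"
    proof (rule ccontr)
      assume "\<not> ?thesis"
      then have "H \<subseteq> - Collect f" unfolding H_def by blast
      then show False using \<open>- Collect f \<in> I\<close> HI id unfolding is_ideal_def by blast
    qed
  next
    assume "\<exists>n. n \<in> \<Phi> (UNIV, col f) \<and> f n"
    then obtain n where "n \<in> H" "f n" unfolding H_def by blast
    then have "H \<subseteq> Collect f" using same by blast
    then show "Collect f \<notin> I" using HI id unfolding is_ideal_def by blast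
  qed
qed

lemma sets_borel_bool: "sets (borel :: bool measure) = sets (count_space UNIV)"
  by (simp add: sets_borel_eq_count_space)

lemma coord_meas [measurable]: "(\<lambda>f::nat \<Rightarrow> bool. f m) \<in> measurable borel (count_space UNIV)"
proof -
  have "(\<lambda>f::nat \<Rightarrow> bool. f m) \<in> borel_measurable borel"
    by (intro borel_measurable_continuous_onI continuous_on_product_coordinates)
  then show ?thesis using measurable_cong_sets[OF refl sets_borel_bool] by blast
qed

lemma ne_meas: "(\<lambda>f::nat \<Rightarrow> bool. f m \<noteq> f n) \<in> measurable borel (count_space UNIV)"
  by measurable

lemma col_meas: "col \<in> borel_measurable borel"
proof (rule measurable_coordinatewise_then_product)
  fix m
  show "(\<lambda>x. col x m) \<in> borel_measurable borel"
  proof (rule measurable_coordinatewise_then_product)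
    fix n
    show "(\<lambda>x. col x m n) \<in> borel_measurable borel"
      using ne_meas[of m n] measurable_cong_sets[OF refl sets_borel_bool[symmetric]]
      unfolding col_def by blast
  qed
qed

lemma meas:
  assumes "(\<lambda>(f::nat \<Rightarrow> bool, c::coloring). (\<lambda>n. n \<in> \<Phi> (Collect f, c)))
          \<in> measurable (restrict_space borel {(f, c). infinite (Collect f)}) borel"
  shows "{f::nat\<Rightarrow>bool. \<exists>n. n \<in> \<Phi>(UNIV, col f) \<and> f n} \<in> sets borel"
proof -
  define \<tau> where "\<tau> = (\<lambda>f::nat\<Rightarrow>bool. ((\<lambda>_::nat. True), col f))"
  have "\<tau> \<in> measurable borel (borel \<Otimes>\<^sub>M borel)"
    unfolding \<tau>_def using col_meas by measurable
  then have "\<tau> \<in> measurable borel borel" by (simp add: borel_prod)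
  then have t: "\<tau> \<in> measurable borel (restrict_space borel {(f, c). infinite (Collect f)})"
    by (intro measurable_restrict_space2) (auto simp: \<tau>_def)
  define g where "g = (\<lambda>f. (\<lambda>n. n \<in> \<Phi> (UNIV, col f)))"
  have "g \<in> borel_measurable borel"
    using measurable_comp[OF t assms] unfolding g_def \<tau>_def o_def by simp
  then have gm: "(\<lambda>f. g f n) \<in> measurable borel (count_space UNIV)" for n
    using measurable_comp[OF _ coord_meas, of g borel n] unfolding o_def by simp
  have "{f::nat\<Rightarrow>bool. \<exists>n. n \<in> \<Phi>(UNIV, col f) \<and> f n} = (\<Union>n. {f. g f n \<and> f n})"
    unfolding g_def by blast
  also have "\<dots> \<in> sets borel"
    using gm by measurable
  finally show ?thesis .
qed
lemma no_borel_ultra: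
  fixes S :: "(nat \<Rightarrow> bool) set"
  assumes Sb: "S \<in> sets borel"
  and fin: "\<And>f g. finite {i. f i \<noteq> g i} \<Longrightarrow> f \<in> S \<Longrightarrow> g \<in> S"
  and compl: "\<And>f. (f \<in> S) \<longleftrightarrow> (\<lambda>i. \<not> f i) \<notin> S"
  shows False
proof -
  define B where "B = measure_pmf (pmf_of_set (UNIV::bool set))"
  define M where "M = PiM (UNIV::nat set) (\<lambda>_. B)"
  have psB: "prob_space B" unfolding B_def by (rule prob_space_measure_pmf)
  interpret prob_space M unfolding M_def by (rule prob_space_PiM) (simp add: psB)
  have setsB: "sets B = sets (borel::bool measure)"
    unfolding B_def by (simp add: sets_borel_eq_count_space)
  have spB: "space B = UNIV" unfolding B_def by simp
  have setsM: "sets M = sets borel"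
    unfolding M_def using sets_PiM_cong[OF refl setsB] sets_PiM_equal_borel by metis
  have spM: "space M = UNIV" unfolding M_def by (simp add: space_PiM spB)
  have SM: "S \<in> events" using Sb setsM by simp
  define X where "X = (\<lambda>(i::nat) (f::nat \<Rightarrow> bool). f i)"
  have Xm: "X i \<in> measurable M B" for i
    unfolding X_def M_def by (rule measurable_component_singleton) simp
  have distrX: "distr M B (X i) = B" for i
    unfolding M_def X_def by (rule distr_PiM_component) (simp_all add: psB)
  have resU: "(\<lambda>i\<in>UNIV. h i) = h" for h :: "nat \<Rightarrow> bool"
    by (simp add: restrict_def)
  have indX: "indep_vars (\<lambda>_. B) X UNIV"
  proof (subst indep_vars_iff_distr_eq_PiM)
    show "distr M (PiM UNIV (\<lambda>_. B)) (\<lambda>x. \<lambda>i\<in>UNIV. X i x) = PiM UNIV (\<lambda>i. distr M B (X i))"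
      unfolding distrX unfolding X_def resU by (simp add: M_def[symmetric] distr_id2)
  qed (auto simp: Xm)
  define A where "A = (\<lambda>i. sigma_sets (space M) { X i -` E \<inter> space M | E. E \<in> sets B})"
  have indA: "indep_sets A UNIV" using indX unfolding indep_vars_def A_def by blast
  have sigA: "sigma_algebra (space M) (A i)" for i
    unfolding A_def by (rule sigma_algebra_sigma_sets) auto
  have tail: "S \<in> tail_events A"
    unfolding tail_events_def
  proof (intro InterI, clarify)
    fix n :: nat
    define G where "G = \<Union> (A ` {n..})"
    have "A i \<subseteq> Pow (space M)" for i
    proof -
      have g: "{X i -` E \<inter> space M | E. E \<in> sets B} \<subseteq> Pow (space M)" by blast
      show ?thesis unfolding A_def using sigma_sets_into_sp[OF g] by blast
    qed
    then have GP: "G \<subseteq> Pow (space M)" unfolding G_def by blast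
    define N where "N = sigma (space M) G"
    have setsN: "sets N = sigma_sets (space M) G" unfolding N_def using GP by simp
    have spN: "space N = UNIV" unfolding N_def using GP spM by simp
    define h where "h = (\<lambda>(f::nat\<Rightarrow>bool) i. if i < n then False else f i)"
    have hm: "h \<in> measurable N M"
      unfolding M_def h_def
    proof (rule measurable_PiM_single')
      fix i :: nat
      show "(\<lambda>\<omega>. if i < n then False else \<omega> i) \<in> measurable N B"
      proof (cases "i < n")
        case True then show ?thesis by (simp add: spB)
      next
        case False
        show ?thesis
        proof (rule measurableI)
          show "(if i < n then False else x i) \<in> space B" for x by (simp add: spB)
          fix E assume "E \<in> sets B"
          then have "X i -` E \<inter> space M \<in> A i" unfolding A_def by blast
          then have "X i -` E \<inter> space M \<in> G" unfolding G_def using False by auto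
          then have "X i -` E \<inter> space M \<in> sets N" unfolding setsN by blast
          moreover have "(\<lambda>\<omega>. if i < n then False else \<omega> i) -` E \<inter> space N = X i -` E \<inter> space M"
            using False by (simp add: X_def spN spM)
          ultimately show "(\<lambda>\<omega>. if i < n then False else \<omega> i) -` E \<inter> space N \<in> sets N" by simp
        qed
      qed
    qed (simp add: spB)
    have "h -` S \<inter> space N \<in> sets N" using measurable_sets[OF hm SM] .
    moreover have "h -` S \<inter> space N = S"
    proof -
      have f1: "finite {i. h f i \<noteq> f i}" for f
        by (rule finite_subset[of _ "{..<n}"]) (auto simp: h_def split: if_splits)
      have f2: "finite {i. f i \<noteq> h f i}" for f
        by (rule finite_subset[of _ "{..<n}"]) (auto simp: h_def split: if_splits)
      have "h f \<in> S \<longleftrightarrow> f \<in> S" for f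
        using fin[OF f1[of f]] fin[OF f2[of f]] by blast
      then show ?thesis by (auto simp: spN)
    qed
    ultimately show "S \<in> sigma_sets (space M) (\<Union> (A ` {n..}))" using setsN G_def by simp
  qed
  have p01: "prob S = 0 \<or> prob S = 1"
    by (rule kolmogorov_0_1_law[OF sigA indA tail])
  define Y where "Y = (\<lambda>(i::nat) (b::bool). \<not> b)"
  have indY: "indep_vars (\<lambda>_. B) (\<lambda>i. Y i \<circ> X i) UNIV"
    by (rule indep_vars_compose[OF indX]) (simp add: Y_def B_def)
  have YXm: "(Y i \<circ> X i) \<in> measurable M B" for i
    using indY unfolding indep_vars_def by blast
  have distrNot: "distr B B Not = B"
  proof -
    have "distr B B Not = distr B (count_space UNIV) Not"
      by (rule distr_cong) (simp_all add: B_def)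
    also have "\<dots> = measure_pmf (map_pmf Not (pmf_of_set UNIV))"
      unfolding B_def by (simp add: map_pmf_rep_eq)
    also have "map_pmf Not (pmf_of_set (UNIV::bool set)) = pmf_of_set UNIV"
    proof -
      have rn: "range Not = (UNIV::bool set)" by (auto simp: UNIV_bool insert_commute)
      show ?thesis by (subst map_pmf_of_set_inj) (auto simp: inj_on_def rn)
    qed
    finally show ?thesis unfolding B_def .
  qed
  have distrY: "distr M B (Y i \<circ> X i) = B" for i
  proof -
    have "distr M B (Y i \<circ> X i) = distr (distr M B (X i)) B Not"
    proof -
      have NotM: "Not \<in> measurable B B" unfolding B_def by simp
      show ?thesis by (subst distr_distr[OF NotM Xm]) (simp add: Y_def comp_def)
    qed
    then show ?thesis using distrX distrNot by simp
  qed
  define T where "T = (\<lambda>x. \<lambda>i\<in>UNIV. (Y i \<circ> X i) x)"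
  have Tm: "T \<in> measurable M M"
    unfolding T_def M_def
    by (rule measurable_PiM_single') (auto simp: YXm[unfolded comp_def] M_def[symmetric] spB)
  have "distr M (PiM UNIV (\<lambda>_. B)) T = PiM UNIV (\<lambda>i. distr M B (Y i \<circ> X i))"
    unfolding T_def using indY
    by (subst (asm) indep_vars_iff_distr_eq_PiM) (auto simp: YXm)
  then have dT: "distr M M T = M" by (simp only: distrY M_def[symmetric])
  have "prob S = measure (distr M M T) S" using dT by simp
  also have "\<dots> = prob (T -` S \<inter> space M)" by (rule measure_distr[OF Tm SM])
  also have "T -` S \<inter> space M = space M - S"
  proof -
    have "T x = (\<lambda>i. \<not> x i)" for x by (simp add: T_def Y_def X_def restrict_def)
    then have "T x \<in> S \<longleftrightarrow> x \<notin> S" for x using compl[of x] by simp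
    then show ?thesis by (auto simp: spM)
  qed
  also have "prob (space M - S) = 1 - prob S" using SM by (rule prob_compl)
  finally have "prob S = 1 - prob S" .
  with p01 show False by auto
qed


theorem fact4p5:
  fixes I :: "nat set set"
  assumes "maximal_ideal I" and "{A. finite A} \<subseteq> I"
  shows "\<not> uniformly_weakly_Ramsey I"
proof
  assume "uniformly_weakly_Ramsey I"
  then obtain \<Phi> where w: "weakly_Ramsey_witness I \<Phi>"
    and m: "(\<lambda>(f::nat \<Rightarrow> bool, c::coloring). (\<lambda>n. n \<in> \<Phi> (Collect f, c)))
          \<in> measurable (restrict_space borel {(f, c). infinite (Collect f)}) borel"
    unfolding uniformly_weakly_Ramsey_def by blast
  have id: "is_ideal I" using assms(1) by (simp add: maximal_ideal_def)
  define S where "S = {f::nat\<Rightarrow>bool. Collect f \<notin> I}"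
  have "S = {f. \<exists>n. n \<in> \<Phi>(UNIV, col f) \<and> f n}"
    using key[OF assms(1) w] by (auto simp: S_def)
  then have Sb: "S \<in> sets borel" using meas[OF m] by simp
  show False
  proof (rule no_borel_ultra[OF Sb])
    fix f g :: "nat \<Rightarrow> bool"
    assume fi: "finite {i. f i \<noteq> g i}" and fS: "f \<in> S"
    show "g \<in> S"
    proof (rule ccontr)
      assume "g \<notin> S"
      then have "Collect g \<in> I" by (simp add: S_def)
      moreover have "{i. f i \<noteq> g i} \<in> I" using fi assms(2) by blast
      ultimately have "Collect g \<union> {i. f i \<noteq> g i} \<in> I" using id unfolding is_ideal_def by blast
      moreover have "Collect f \<subseteq> Collect g \<union> {i. f i \<noteq> g i}" by blast
      ultimately have "Collect f \<in> I" using id unfolding is_ideal_def by blast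
      then show False using fS by (simp add: S_def)
    qed
  next
    fix f :: "nat \<Rightarrow> bool"
    have ce: "{i. \<not> f i} = - Collect f" by blast
    have "Collect f \<notin> I \<longleftrightarrow> - Collect f \<in> I"
    proof
      assume "Collect f \<notin> I" then show "- Collect f \<in> I" using max_prime[OF assms(1)] by blast
    next
      assume a: "- Collect f \<in> I"
      show "Collect f \<notin> I"
      proof
        assume "Collect f \<in> I"
        with a have "Collect f \<union> - Collect f \<in> I" using id unfolding is_ideal_def by blast
        then show False using id unfolding is_ideal_def by simp
      qed
    qed
    then show "(f \<in> S) \<longleftrightarrow> (\<lambda>i. \<not> f i) \<notin> S" by (simp add: S_def ce)
  qed
qed

end
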